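(* Let $\mathfrak g\xrightarrow{\mu}\mathfrak h$ be a crossed module of Lie algebras and let $\mathfrak e_1\xrightarrow{\epsilon}\mathfrak e_0$ (with action $\mathcal L^\epsilon$), together with crossed module morphisms $(j_1,j_0):(W\xrightarrow{\phi}V)\to(\mathfrak e_1\to\mathfrak e_0)$ and $(\pi_1,\pi_0):(\mathfrak e_1\to\mathfrak e_0)\to(\mathfrak g\to\mathfrak h)$, be a 2-extension of $\mathfrak g\xrightarrow{\mu}\mathfrak h$ by $W\xrightarrow{\phi}V$. Identify $W\subseteq\mathfrak e_1$ and $V\subseteq\mathfrak e_0$ via $j_1,j_0$, and let $\sigma_0:\mathfrak h\to\mathfrak e_0$, $\sigma_1:\mathfrak g\to\mathfrak e_1$ be linear maps with $\pi_0\sigma_0=\mathrm{id}$, $\pi_1\sigma_1=\mathrm{id}$. Then the maps $$\rho_0^0(y)v=[\sigma_0(y),v]_{\mathfrak e_0},\qquad\rho_0^1(y)w=\mathcal L^\epsilon_{\sigma_0(y)}w,\qquad\rho_1(x)v=-\mathcal L^\epsilon_v\sigma_1(x)$$ ($y\in\mathfrak h$, $v\in V$, $w\in W$, $x\in\mathfrak g$) take values in $V$, $W$, $W$ respectively and define a 2-representation of $\mathfrak g\xrightarrow{\mu}\mathfrak h$ on $W\xrightarrow{\phi}V$.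
   Context: A crossed module of Lie algebras consists of Lie algebras $\mathfrak g,\mathfrak h$, a Lie algebra homomorphism $\mu:\mathfrak g\to\mathfrak h$ and a Lie algebra homomorphism $\mathcal L:\mathfrak h\to\mathrm{Der}(\mathfrak g)$ with $\mu(\mathcal L_yx)=[y,\mu(x)]$ and $\mathcal L_{\mu(x_0)}x_1=[x_0,x_1]$. A morphism of crossed modules is a pair of Lie algebra homomorphisms $(f_1,f_0)$ commuting with the structure maps and satisfying $f_1(\mathcal L_yx)=\mathcal L'_{f_0(y)}f_1(x)$. A linear map $\phi:W\to V$ is regarded as a crossed module with abelian brackets and zero action. A 2-extension of $\mathfrak g\xrightarrow{\mu}\mathfrak h$ by $W\xrightarrow{\phi}V$ is a crossed module $\mathfrak e_1\xrightarrow{\epsilon}\mathfrak e_0$ with morphisms $(j_1,j_0)$, $(\pi_1,\pi_0)$ as in the claim such that $0\to W\xrightarrow{j_1}\mathfrak e_1\xrightarrow{\pi_1}\mathfrak g\to0$ and $0\to V\xrightarrow{j_0}\mathfrak e_0\xrightarrow{\pi_0}\mathfrak h\to0$ are exact. A 2-representation on $\phi$: linear maps $\rho_0^1:\mathfrak h\to\mathfrak{gl}(W)$, $\rho_0^0:\mathfrak h\to\mathfrak{gl}(V)$, $\rho_1:\mathfrak g\to\mathrm{Hom}(V,W)$ with $\rho_0^1,\rho_0^0$ Lie algebra representations, $\phi\rho_0^1(y)=\rho_0^0(y)\phi$, $\rho_1([x_0,x_1])=\rho_1(x_0)\phi\rho_1(x_1)-\rho_1(x_1)\phi\rho_1(x_0)$,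 $\rho_0^0(\mu(x))=\phi\rho_1(x)$, $\rho_0^1(\mu(x))=\rho_1(x)\phi$, $\rho_1(\mathcal L_yx)=\rho_0^1(y)\rho_1(x)-\rho_1(x)\rho_0^0(y)$. *)

theory Defs
  imports Main "HOL.Vector_Spaces"
begin

definition lie_algebra ::
  "('k::field \<Rightarrow> 'a::ab_group_add \<Rightarrow> 'a) \<Rightarrow> ('a \<Rightarrow> 'a \<Rightarrow> 'a) \<Rightarrow> bool" where
  "lie_algebra s br \<longleftrightarrow>
     vector_space s \<and>
     (\<forall>x. Vector_Spaces.linear s s (br x)) \<and>
     (\<forall>y. Vector_Spaces.linear s s (\<lambda>x. br x y)) \<and>
     (\<forall>x. br x x = 0) \<and>
     (\<forall>x y z. br x (br y z) + br y (br z x) + br z (br x y) = 0)"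

definition lie_hom ::
  "('k::field \<Rightarrow> 'a::ab_group_add \<Rightarrow> 'a) \<Rightarrow> ('a \<Rightarrow> 'a \<Rightarrow> 'a) \<Rightarrow>
   ('k \<Rightarrow> 'b::ab_group_add \<Rightarrow> 'b) \<Rightarrow> ('b \<Rightarrow> 'b \<Rightarrow> 'b) \<Rightarrow> ('a \<Rightarrow> 'b) \<Rightarrow> bool" where
  "lie_hom sa bra sb brb f \<longleftrightarrow>
     Vector_Spaces.linear sa sb f \<and> (\<forall>x y. f (bra x y) = brb (f x) (f y))"

definition derivation ::
  "('k::field \<Rightarrow> 'a::ab_group_add \<Rightarrow> 'a) \<Rightarrow> ('a \<Rightarrow> 'a \<Rightarrow> 'a) \<Rightarrow> ('a \<Rightarrow> 'a) \<Rightarrow> bool" where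
  "derivation s br D \<longleftrightarrow>
     Vector_Spaces.linear s s D \<and> (\<forall>x y. D (br x y) = br (D x) y + br x (D y))"

text \<open>A Lie algebra homomorphism h -> Der(g) (bracket of Der(g) = commutator).\<close>
definition lie_action ::
  "('k::field \<Rightarrow> 'h::ab_group_add \<Rightarrow> 'h) \<Rightarrow> ('h \<Rightarrow> 'h \<Rightarrow> 'h) \<Rightarrow>
   ('k \<Rightarrow> 'g::ab_group_add \<Rightarrow> 'g) \<Rightarrow> ('g \<Rightarrow> 'g \<Rightarrow> 'g) \<Rightarrow> ('h \<Rightarrow> 'g \<Rightarrow> 'g) \<Rightarrow> bool" where
  "lie_action sh bh sg bg L \<longleftrightarrow>
     (\<forall>y. derivation sg bg (L y)) \<and>
     (\<forall>x. Vector_Spaces.linear sh sg (\<lambda>y. L y x)) \<and>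
     (\<forall>y1 y2 x. L (bh y1 y2) x = L y1 (L y2 x) - L y2 (L y1 x))"

definition crossed_module ::
  "('k::field \<Rightarrow> 'g::ab_group_add \<Rightarrow> 'g) \<Rightarrow> ('g \<Rightarrow> 'g \<Rightarrow> 'g) \<Rightarrow>
   ('k \<Rightarrow> 'h::ab_group_add \<Rightarrow> 'h) \<Rightarrow> ('h \<Rightarrow> 'h \<Rightarrow> 'h) \<Rightarrow>
   ('g \<Rightarrow> 'h) \<Rightarrow> ('h \<Rightarrow> 'g \<Rightarrow> 'g) \<Rightarrow> bool" where
  "crossed_module sg bg sh bh mu L \<longleftrightarrow>
     lie_algebra sg bg \<and> lie_algebra sh bh \<and>
     lie_hom sg bg sh bh mu \<and> lie_action sh bh sg bg L \<and>
     (\<forall>y x. mu (L y x) = bh y (mu x)) \<and>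
     (\<forall>x0 x1. L (mu x0) x1 = bg x0 x1)"

definition cm_morphism ::
  "('k::field \<Rightarrow> 'g::ab_group_add \<Rightarrow> 'g) \<Rightarrow> ('g \<Rightarrow> 'g \<Rightarrow> 'g) \<Rightarrow>
   ('k \<Rightarrow> 'h::ab_group_add \<Rightarrow> 'h) \<Rightarrow> ('h \<Rightarrow> 'h \<Rightarrow> 'h) \<Rightarrow>
   ('g \<Rightarrow> 'h) \<Rightarrow> ('h \<Rightarrow> 'g \<Rightarrow> 'g) \<Rightarrow>
   ('k \<Rightarrow> 'g2::ab_group_add \<Rightarrow> 'g2) \<Rightarrow> ('g2 \<Rightarrow> 'g2 \<Rightarrow> 'g2) \<Rightarrow>
   ('k \<Rightarrow> 'h2::ab_group_add \<Rightarrow> 'h2) \<Rightarrow> ('h2 \<Rightarrow> 'h2 \<Rightarrow> 'h2) \<Rightarrow>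
   ('g2 \<Rightarrow> 'h2) \<Rightarrow> ('h2 \<Rightarrow> 'g2 \<Rightarrow> 'g2) \<Rightarrow>
   ('g \<Rightarrow> 'g2) \<Rightarrow> ('h \<Rightarrow> 'h2) \<Rightarrow> bool" where
  "cm_morphism sg bg sh bh mu L sg' bg' sh' bh' mu' L' f1 f0 \<longleftrightarrow>
     lie_hom sg bg sg' bg' f1 \<and> lie_hom sh bh sh' bh' f0 \<and>
     (\<forall>x. f0 (mu x) = mu' (f1 x)) \<and>
     (\<forall>y x. f1 (L y x) = L' (f0 y) (f1 x))"

definition short_exact ::
  "('k::field \<Rightarrow> 'a::ab_group_add \<Rightarrow> 'a) \<Rightarrow> ('k \<Rightarrow> 'b::ab_group_add \<Rightarrow> 'b) \<Rightarrow>
   ('k \<Rightarrow> 'c::ab_group_add \<Rightarrow> 'c) \<Rightarrow> ('a \<Rightarrow> 'b) \<Rightarrow> ('b \<Rightarrow> 'c) \<Rightarrow> bool" where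
  "short_exact sa sb sc i p \<longleftrightarrow>
     Vector_Spaces.linear sa sb i \<and> Vector_Spaces.linear sb sc p \<and>
     inj i \<and> surj p \<and> range i = {b. p b = 0}"

text \<open>A linear map phi : W -> V regarded as a crossed module: abelian brackets, zero action.\<close>
definition two_extension ::
  "('k::field \<Rightarrow> 'g::ab_group_add \<Rightarrow> 'g) \<Rightarrow> ('g \<Rightarrow> 'g \<Rightarrow> 'g) \<Rightarrow>
   ('k \<Rightarrow> 'h::ab_group_add \<Rightarrow> 'h) \<Rightarrow> ('h \<Rightarrow> 'h \<Rightarrow> 'h) \<Rightarrow>
   ('g \<Rightarrow> 'h) \<Rightarrow> ('h \<Rightarrow> 'g \<Rightarrow> 'g) \<Rightarrow>
   ('k \<Rightarrow> 'w::ab_group_add \<Rightarrow> 'w) \<Rightarrow> ('k \<Rightarrow> 'v::ab_group_add \<Rightarrow> 'v) \<Rightarrow> ('w \<Rightarrow> 'v) \<Rightarrow>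
   ('k \<Rightarrow> 'e1::ab_group_add \<Rightarrow> 'e1) \<Rightarrow> ('e1 \<Rightarrow> 'e1 \<Rightarrow> 'e1) \<Rightarrow>
   ('k \<Rightarrow> 'e0::ab_group_add \<Rightarrow> 'e0) \<Rightarrow> ('e0 \<Rightarrow> 'e0 \<Rightarrow> 'e0) \<Rightarrow>
   ('e1 \<Rightarrow> 'e0) \<Rightarrow> ('e0 \<Rightarrow> 'e1 \<Rightarrow> 'e1) \<Rightarrow>
   ('w \<Rightarrow> 'e1) \<Rightarrow> ('v \<Rightarrow> 'e0) \<Rightarrow> ('e1 \<Rightarrow> 'g) \<Rightarrow> ('e0 \<Rightarrow> 'h) \<Rightarrow> bool" where
  "two_extension sg bg sh bh mu L sw sv phi se1 be1 se0 be0 eps Le j1 j0 pi1 pi0 \<longleftrightarrow>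
     crossed_module se1 be1 se0 be0 eps Le \<and>
     cm_morphism sw (\<lambda>_ _. 0) sv (\<lambda>_ _. 0) phi (\<lambda>_ _. 0)
                 se1 be1 se0 be0 eps Le j1 j0 \<and>
     cm_morphism se1 be1 se0 be0 eps Le sg bg sh bh mu L pi1 pi0 \<and>
     short_exact sw se1 sg j1 pi1 \<and> short_exact sv se0 sh j0 pi0"

definition two_representation ::
  "('k::field \<Rightarrow> 'g::ab_group_add \<Rightarrow> 'g) \<Rightarrow> ('g \<Rightarrow> 'g \<Rightarrow> 'g) \<Rightarrow>
   ('k \<Rightarrow> 'h::ab_group_add \<Rightarrow> 'h) \<Rightarrow> ('h \<Rightarrow> 'h \<Rightarrow> 'h) \<Rightarrow>
   ('g \<Rightarrow> 'h) \<Rightarrow> ('h \<Rightarrow> 'g \<Rightarrow> 'g) \<Rightarrow>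
   ('k \<Rightarrow> 'w::ab_group_add \<Rightarrow> 'w) \<Rightarrow> ('k \<Rightarrow> 'v::ab_group_add \<Rightarrow> 'v) \<Rightarrow> ('w \<Rightarrow> 'v) \<Rightarrow>
   ('h \<Rightarrow> 'w \<Rightarrow> 'w) \<Rightarrow> ('h \<Rightarrow> 'v \<Rightarrow> 'v) \<Rightarrow> ('g \<Rightarrow> 'v \<Rightarrow> 'w) \<Rightarrow> bool" where
  "two_representation sg bg sh bh mu L sw sv phi r01 r00 r1 \<longleftrightarrow>
     (\<forall>y. Vector_Spaces.linear sw sw (r01 y)) \<and>
     (\<forall>w. Vector_Spaces.linear sh sw (\<lambda>y. r01 y w)) \<and>
     (\<forall>y. Vector_Spaces.linear sv sv (r00 y)) \<and>
     (\<forall>v. Vector_Spaces.linear sh sv (\<lambda>y. r00 y v)) \<and>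
     (\<forall>x. Vector_Spaces.linear sv sw (r1 x)) \<and>
     (\<forall>v. Vector_Spaces.linear sg sw (\<lambda>x. r1 x v)) \<and>
     (\<forall>y1 y2 w. r01 (bh y1 y2) w = r01 y1 (r01 y2 w) - r01 y2 (r01 y1 w)) \<and>
     (\<forall>y1 y2 v. r00 (bh y1 y2) v = r00 y1 (r00 y2 v) - r00 y2 (r00 y1 v)) \<and>
     (\<forall>y w. phi (r01 y w) = r00 y (phi w)) \<and>
     (\<forall>x0 x1 v. r1 (bg x0 x1) v =
                 r1 x0 (phi (r1 x1 v)) - r1 x1 (phi (r1 x0 v))) \<and>
     (\<forall>x v. r00 (mu x) v = phi (r1 x v)) \<and>
     (\<forall>x w. r01 (mu x) w = r1 x (phi w)) \<and>
     (\<forall>y x v. r1 (L y x) v = r01 y (r1 x v) - r1 x (r00 y v))"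

end

theory Submission
  imports Defs
begin

lemma linD:
  assumes "Vector_Spaces.linear s1 s2 f"
  shows "f (x + y) = f x + f y" "f (s1 c x) = s2 c (f x)" "f 0 = 0"
    "f (- x) = - f x" "f (x - y) = f x - f y"
  using module_hom.add[OF module_hom_linearI[OF assms]]
    module_hom.scale[OF module_hom_linearI[OF assms]]
    module_hom.zero[OF module_hom_linearI[OF assms]]
    module_hom.neg[OF module_hom_linearI[OF assms]]
    module_hom.diff[OF module_hom_linearI[OF assms]] by auto

lemma lie_antisym:
  assumes "lie_algebra s br"
  shows "br x y = - br y x"
proof -
  have l1: "Vector_Spaces.linear s s (br z)" for z using assms unfolding lie_algebra_def by auto
  have l2: "Vector_Spaces.linear s s (\<lambda>u. br u z)" for z using assms unfolding lie_algebra_def by auto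
  have z: "br u u = 0" for u using assms unfolding lie_algebra_def by auto
  have "0 = br (x + y) (x + y)" using z by simp
  also have "\<dots> = br x x + br x y + (br y x + br y y)"
  proof -
    have a: "br u (v + w) = br u v + br u w" for u v w using linD(1)[OF l1[of u]] by simp
    have b: "br (v + w) u = br v u + br w u" for u v w using linD(1)[OF l2[of u]] by simp
    show ?thesis by (simp add: a b)
  qed
  finally have "br x y + br y x = 0" using z by simp
  then show ?thesis by (simp add: eq_neg_iff_add_eq_0)
qed

lemma grp: "(A::'a::ab_group_add) + B + C = 0 \<Longrightarrow> D = - C \<Longrightarrow> B = - E \<Longrightarrow> D = A - E"
proof -
  assume "A + B + C = 0" "D = - C" "B = - E"
  then have "C = - (A + B)" by (metis add.commute add_eq_0_iff)
  then show ?thesis using \<open>D = - C\<close> \<open>B = - E\<close> by simp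
qed

lemma the_inj:
  assumes "inj f" "e \<in> range f"
  shows "f (THE a. f a = e) = e"
proof -
  from assms(2) obtain a where a: "f a = e" by auto
  have "(THE a. f a = e) = a"
    by (rule the_equality) (use a assms(1) in \<open>auto simp: inj_def\<close>)
  with a show ?thesis by simp
qed

lemma inv_lin:
  assumes vs: "vector_space sc" and li: "Vector_Spaces.linear sa sb i" and inj: "inj i"
    and ga: "\<And>x y. g (x + y) = g x + g y"
    and gs: "\<And>c x. g (sc c x) = sb c (g x)"
    and rg: "\<And>x. g x \<in> range i"
  shows "Vector_Spaces.linear sc sa (\<lambda>x. THE a. i a = g x)"
proof -
  let ?h = "\<lambda>x. THE a. i a = g x"
  have hi: "i (?h x) = g x" for x using the_inj[OF inj rg] .
  have va: "vector_space sa" and vb: "vector_space sb" using li unfolding linear_iff by auto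
  have "?h (x + y) = ?h x + ?h y" for x y
  proof -
    have "i (?h (x + y)) = g (x + y)" by (rule hi)
    also have "\<dots> = g x + g y" by (rule ga)
    also have "\<dots> = i (?h x + ?h y)" using hi linD(1)[OF li] by simp
    finally have "i (?h (x + y)) = i (?h x + ?h y)" .
    then show ?thesis using inj by (simp add: inj_def)
  qed
  moreover have "?h (sc c x) = sa c (?h x)" for c x
  proof -
    have "i (?h (sc c x)) = g (sc c x)" by (rule hi)
    also have "\<dots> = sb c (g x)" by (rule gs)
    also have "\<dots> = i (sa c (?h x))" using hi linD(2)[OF li] by simp
    finally have "i (?h (sc c x)) = i (sa c (?h x))" .
    then show ?thesis using inj by (simp add: inj_def)
  qed
  ultimately show ?thesis unfolding linear_iff using vs va by auto
qed
theorem mainTheorem5: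
  fixes sg :: "'k::field \<Rightarrow> 'g::ab_group_add \<Rightarrow> 'g" and bg :: "'g \<Rightarrow> 'g \<Rightarrow> 'g"
    and sh :: "'k \<Rightarrow> 'h::ab_group_add \<Rightarrow> 'h" and bh :: "'h \<Rightarrow> 'h \<Rightarrow> 'h"
    and mu :: "'g \<Rightarrow> 'h" and L :: "'h \<Rightarrow> 'g \<Rightarrow> 'g"
    and sw :: "'k \<Rightarrow> 'w::ab_group_add \<Rightarrow> 'w" and sv :: "'k \<Rightarrow> 'v::ab_group_add \<Rightarrow> 'v"
    and phi :: "'w \<Rightarrow> 'v"
    and se1 :: "'k \<Rightarrow> 'e1::ab_group_add \<Rightarrow> 'e1" and be1 :: "'e1 \<Rightarrow> 'e1 \<Rightarrow> 'e1"
    and se0 :: "'k \<Rightarrow> 'e0::ab_group_add \<Rightarrow> 'e0" and be0 :: "'e0 \<Rightarrow> 'e0 \<Rightarrow> 'e0"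
    and eps :: "'e1 \<Rightarrow> 'e0" and Le :: "'e0 \<Rightarrow> 'e1 \<Rightarrow> 'e1"
    and j1 :: "'w \<Rightarrow> 'e1" and j0 :: "'v \<Rightarrow> 'e0"
    and pi1 :: "'e1 \<Rightarrow> 'g" and pi0 :: "'e0 \<Rightarrow> 'h"
    and sigma0 :: "'h \<Rightarrow> 'e0" and sigma1 :: "'g \<Rightarrow> 'e1"
  assumes cm: "crossed_module sg bg sh bh mu L"
    and phi_lin: "Vector_Spaces.linear sw sv phi"
    and ext: "two_extension sg bg sh bh mu L sw sv phi se1 be1 se0 be0 eps Le j1 j0 pi1 pi0"
    and sigma0_lin: "Vector_Spaces.linear sh se0 sigma0"
    and sigma1_lin: "Vector_Spaces.linear sg se1 sigma1"
    and sec0: "\<And>y. pi0 (sigma0 y) = y"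
    and sec1: "\<And>x. pi1 (sigma1 x) = x"
  shows "(\<forall>y v. be0 (sigma0 y) (j0 v) \<in> range j0) \<and>
         (\<forall>y w. Le (sigma0 y) (j1 w) \<in> range j1) \<and>
         (\<forall>x v. - Le (j0 v) (sigma1 x) \<in> range j1) \<and>
         two_representation sg bg sh bh mu L sw sv phi
           (\<lambda>y w. THE w'. j1 w' = Le (sigma0 y) (j1 w))
           (\<lambda>y v. THE v'. j0 v' = be0 (sigma0 y) (j0 v))
           (\<lambda>x v. THE w'. j1 w' = - Le (j0 v) (sigma1 x))"
proof -
  note cm' = cm[unfolded crossed_module_def lie_hom_def lie_action_def derivation_def]
  note ext' = ext[unfolded two_extension_def crossed_module_def cm_morphism_def lie_hom_def
      lie_action_def derivation_def short_exact_def]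
  have la_h: "lie_algebra sh bh" using cm' by auto
  have la_g: "lie_algebra sg bg" using cm' by auto
  have la_e1: "lie_algebra se1 be1" and la_e0: "lie_algebra se0 be0" using ext' by auto+
  have vs_g: "vector_space sg" and vs_h: "vector_space sh" and vs_e1: "vector_space se1"
    and vs_e0: "vector_space se0"
    using la_g la_h la_e1 la_e0 unfolding lie_algebra_def by blast+
  have bhl: "Vector_Spaces.linear sh sh (bh y)" for y using la_h unfolding lie_algebra_def by blast
  have be0l: "Vector_Spaces.linear se0 se0 (be0 y)" for y using la_e0 unfolding lie_algebra_def by blast
  have be0r: "Vector_Spaces.linear se0 se0 (\<lambda>x. be0 x y)" for y using la_e0 unfolding lie_algebra_def by blast
  have be1l: "Vector_Spaces.linear se1 se1 (be1 y)" for y using la_e1 unfolding lie_algebra_def by blast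
  have be1r: "Vector_Spaces.linear se1 se1 (\<lambda>x. be1 x y)" for y using la_e1 unfolding lie_algebra_def by blast
  have Ll: "Vector_Spaces.linear sg sg (L y)" for y using cm' by auto
  have Lr: "Vector_Spaces.linear sh sg (\<lambda>y. L y x)" for x using cm' by auto
  have Lel: "Vector_Spaces.linear se1 se1 (Le y)" for y using ext' by auto
  have Ler: "Vector_Spaces.linear se0 se1 (\<lambda>y. Le y x)" for x using ext' by auto
  have Le_der: "Le a (be1 x y) = be1 (Le a x) y + be1 x (Le a y)" for a x y using ext' by auto
  have Le_br: "Le (be0 a b) x = Le a (Le b x) - Le b (Le a x)" for a b x using ext' by auto
  have eps_Le: "eps (Le a x) = be0 a (eps x)" for a x using ext' by auto
  have Le_eps: "Le (eps x0) x1 = be1 x0 x1" for x0 x1 using ext' by auto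
  have epsl: "Vector_Spaces.linear se1 se0 eps" using ext' by auto
  have j1l: "Vector_Spaces.linear sw se1 j1" and j0l: "Vector_Spaces.linear sv se0 j0"
    using ext' by auto+
  have vs_w: "vector_space sw" and vs_v: "vector_space sv" using j1l j0l unfolding linear_iff by blast+
  have j0br: "be0 (j0 a) (j0 b) = 0" for a b
    using ext' linD(3)[OF j0l] by metis
  have j1Le: "Le (j0 a) (j1 b) = 0" for a b
    using ext' linD(3)[OF j1l] by metis
  have j_eps: "eps (j1 w) = j0 (phi w)" for w using ext' by metis
  have pi1l: "Vector_Spaces.linear se1 sg pi1" and pi0l: "Vector_Spaces.linear se0 sh pi0"
    using ext' by auto+
  have pi1br: "pi1 (be1 a b) = bg (pi1 a) (pi1 b)" for a b using ext' by auto
  have pi0br: "pi0 (be0 a b) = bh (pi0 a) (pi0 b)" for a b using ext' by auto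
  have pi_eps: "pi0 (eps x) = mu (pi1 x)" for x using ext' by auto
  have pi_Le: "pi1 (Le y x) = L (pi0 y) (pi1 x)" for y x using ext' by auto
  have inj1: "inj j1" and inj0: "inj j0" using ext' by auto+
  have rg1: "range j1 = {b. pi1 b = 0}" and rg0: "range j0 = {b. pi0 b = 0}" using ext' by auto+
  have pj1: "pi1 (j1 w) = 0" for w using rg1 by auto
  have pj0: "pi0 (j0 v) = 0" for v using rg0 by auto
  have ker1: "pi1 e = 0 \<Longrightarrow> \<exists>w. e = j1 w" for e using rg1 by auto
  have ker0: "pi0 e = 0 \<Longrightarrow> \<exists>v. e = j0 v" for e using rg0 by auto
  have j1eq: "j1 a = j1 b \<Longrightarrow> a = b" for a b using inj1 by (simp add: inj_def)
  have j0eq: "j0 a = j0 b \<Longrightarrow> a = b" for a b using inj0 by (simp add: inj_def)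
  have e1anti: "be1 x y = - be1 y x" for x y by (rule lie_antisym[OF la_e1])
  have e0anti: "be0 x y = - be0 y x" for x y by (rule lie_antisym[OF la_e0])

  have R1: "be0 (sigma0 y) (j0 v) \<in> range j0" for y v
    using rg0 pi0br pj0 sec0 linD(3)[OF bhl] by simp
  have R2: "Le (sigma0 y) (j1 w) \<in> range j1" for y w
    using rg1 pi_Le pj1 linD(3)[OF Ll] by simp
  have R3: "- Le (j0 v) (sigma1 x) \<in> range j1" for x v
    using rg1 pi_Le pj0 linD(3)[OF Lr] linD(4)[OF pi1l] by simp

  define r01 where "r01 = (\<lambda>y w. THE w'. j1 w' = Le (sigma0 y) (j1 w))"
  define r00 where "r00 = (\<lambda>y v. THE v'. j0 v' = be0 (sigma0 y) (j0 v))"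
  define r1 where "r1 = (\<lambda>x v. THE w'. j1 w' = - Le (j0 v) (sigma1 x))"
  have J01: "j1 (r01 y w) = Le (sigma0 y) (j1 w)" for y w
    unfolding r01_def by (rule the_inj[OF inj1 R2])
  have J00: "j0 (r00 y v) = be0 (sigma0 y) (j0 v)" for y v
    unfolding r00_def by (rule the_inj[OF inj0 R1])
  have J1: "j1 (r1 x v) = - Le (j0 v) (sigma1 x)" for x v
    unfolding r1_def by (rule the_inj[OF inj1 R3])

  have D0: "\<exists>v. sigma0 (bh y1 y2) = be0 (sigma0 y1) (sigma0 y2) + j0 v" for y1 y2
  proof -
    have "pi0 (sigma0 (bh y1 y2) - be0 (sigma0 y1) (sigma0 y2)) = 0"
      using linD(5)[OF pi0l] pi0br sec0 by simp
    then obtain v where "sigma0 (bh y1 y2) - be0 (sigma0 y1) (sigma0 y2) = j0 v" using ker0 by blast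
    then show ?thesis by (metis add_diff_cancel_left' diff_add_cancel)
  qed
  have D1: "\<exists>w. sigma1 (bg x0 x1) = be1 (sigma1 x0) (sigma1 x1) + j1 w" for x0 x1
  proof -
    have "pi1 (sigma1 (bg x0 x1) - be1 (sigma1 x0) (sigma1 x1)) = 0"
      using linD(5)[OF pi1l] pi1br sec1 by simp
    then obtain w where "sigma1 (bg x0 x1) - be1 (sigma1 x0) (sigma1 x1) = j1 w" using ker1 by blast
    then show ?thesis by (metis add_diff_cancel_left' diff_add_cancel)
  qed
  have DL: "\<exists>w. sigma1 (L y x) = Le (sigma0 y) (sigma1 x) + j1 w" for y x
  proof -
    have "pi1 (sigma1 (L y x) - Le (sigma0 y) (sigma1 x)) = 0"
      using linD(5)[OF pi1l] pi_Le sec0 sec1 by simp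
    then obtain w where "sigma1 (L y x) - Le (sigma0 y) (sigma1 x) = j1 w" using ker1 by blast
    then show ?thesis by (metis add_diff_cancel_left' diff_add_cancel)
  qed
  have Dmu: "\<exists>v. sigma0 (mu x) = eps (sigma1 x) + j0 v" for x
  proof -
    have "pi0 (sigma0 (mu x) - eps (sigma1 x)) = 0"
      using linD(5)[OF pi0l] pi_eps sec0 sec1 by simp
    then obtain v where "sigma0 (mu x) - eps (sigma1 x) = j0 v" using ker0 by blast
    then show ?thesis by (metis add_diff_cancel_left' diff_add_cancel)
  qed

  have L1: "Vector_Spaces.linear sw sw (r01 y)" for y
    unfolding r01_def
    by (rule inv_lin[OF vs_w j1l inj1 _ _ R2])
       (simp_all add: linD(1,2)[OF j1l] linD(1,2)[OF Lel])
  have L2: "Vector_Spaces.linear sh sw (\<lambda>y. r01 y w)" for w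
    unfolding r01_def
    by (rule inv_lin[OF vs_h j1l inj1 _ _ R2])
       (simp_all add: linD(1,2)[OF sigma0_lin] linD(1,2)[OF Ler])
  have L3: "Vector_Spaces.linear sv sv (r00 y)" for y
    unfolding r00_def
    by (rule inv_lin[OF vs_v j0l inj0 _ _ R1])
       (simp_all add: linD(1,2)[OF j0l] linD(1,2)[OF be0l])
  have L4: "Vector_Spaces.linear sh sv (\<lambda>y. r00 y v)" for v
    unfolding r00_def
    by (rule inv_lin[OF vs_h j0l inj0 _ _ R1])
       (simp_all add: linD(1,2)[OF sigma0_lin] linD(1,2)[OF be0r])
  have L5: "Vector_Spaces.linear sv sw (r1 x)" for x
    unfolding r1_def
    by (rule inv_lin[OF vs_v j1l inj1 _ _ R3])
       (simp_all add: linD(1,2)[OF j0l] linD(1,2)[OF Ler] module.scale_minus_right[OF vs_e1[folded module_iff_vector_space]])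
  have L6: "Vector_Spaces.linear sg sw (\<lambda>x. r1 x v)" for v
    unfolding r1_def
    by (rule inv_lin[OF vs_g j1l inj1 _ _ R3])
       (simp_all add: linD(1,2)[OF sigma1_lin] linD(1,2)[OF Lel] module.scale_minus_right[OF vs_e1[folded module_iff_vector_space]])

  have I1: "r01 (bh y1 y2) w = r01 y1 (r01 y2 w) - r01 y2 (r01 y1 w)" for y1 y2 w
  proof (rule j1eq)
    obtain v where v: "sigma0 (bh y1 y2) = be0 (sigma0 y1) (sigma0 y2) + j0 v" using D0 by blast
    show "j1 (r01 (bh y1 y2) w) = j1 (r01 y1 (r01 y2 w) - r01 y2 (r01 y1 w))"
      by (simp add: J01 v linD(1)[OF Ler] linD(5)[OF j1l] j1Le Le_br)
  qed
  have I2: "r00 (bh y1 y2) u = r00 y1 (r00 y2 u) - r00 y2 (r00 y1 u)" for y1 y2 u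
  proof (rule j0eq)
    obtain v where v: "sigma0 (bh y1 y2) = be0 (sigma0 y1) (sigma0 y2) + j0 v" using D0 by blast
    have jac: "be0 (be0 a b) c = be0 a (be0 b c) - be0 b (be0 a c)" for a b c
    proof -
      have "be0 a (be0 b c) + be0 b (be0 c a) + be0 c (be0 a b) = 0"
        using la_e0 unfolding lie_algebra_def by blast
      moreover have "be0 (be0 a b) c = - be0 c (be0 a b)" by (rule e0anti)
      moreover have "be0 b (be0 c a) = - be0 b (be0 a c)"
        using e0anti[of c a] linD(4)[OF be0l[of b]] by simp
      ultimately show ?thesis by (rule grp)
    qed
    show "j0 (r00 (bh y1 y2) u) = j0 (r00 y1 (r00 y2 u) - r00 y2 (r00 y1 u))"
      by (simp add: J00 v linD(1)[OF be0r] linD(5)[OF j0l] j0br jac)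
  qed
  have I3: "phi (r01 y w) = r00 y (phi w)" for y w
  proof (rule j0eq)
    show "j0 (phi (r01 y w)) = j0 (r00 y (phi w))"
      by (simp add: J00 flip: j_eps) (simp add: J01 eps_Le)
  qed
  have I4: "r1 (bg x0 x1) v = r1 x0 (phi (r1 x1 v)) - r1 x1 (phi (r1 x0 v))" for x0 x1 v
  proof (rule j1eq)
    obtain w where w: "sigma1 (bg x0 x1) = be1 (sigma1 x0) (sigma1 x1) + j1 w" using D1 by blast
    have "j1 (r1 (bg x0 x1) v) = - be1 (Le (j0 v) (sigma1 x0)) (sigma1 x1)
        - be1 (sigma1 x0) (Le (j0 v) (sigma1 x1))"
      by (simp add: J1 w linD(1)[OF Lel] j1Le Le_der)
    also have "\<dots> = j1 (r1 x0 (phi (r1 x1 v)) - r1 x1 (phi (r1 x0 v)))"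
      by (simp add: linD(5)[OF j1l] J1 flip: j_eps)
         (simp add: Le_eps J1 linD(4)[OF be1r] e1anti[of "sigma1 x0"])
    finally show "j1 (r1 (bg x0 x1) v) = j1 (r1 x0 (phi (r1 x1 v)) - r1 x1 (phi (r1 x0 v)))" .
  qed
  have I5: "r00 (mu x) v = phi (r1 x v)" for x v
  proof (rule j0eq)
    obtain u where u: "sigma0 (mu x) = eps (sigma1 x) + j0 u" using Dmu by blast
    show "j0 (r00 (mu x) v) = j0 (phi (r1 x v))"
      by (simp add: J00 u linD(1)[OF be0r] j0br flip: j_eps)
         (simp add: J1 linD(4)[OF epsl] eps_Le e0anti[of "eps (sigma1 x)"])
  qed
  have I6: "r01 (mu x) w = r1 x (phi w)" for x w
  proof (rule j1eq)
    obtain u where u: "sigma0 (mu x) = eps (sigma1 x) + j0 u" using Dmu by blast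
    show "j1 (r01 (mu x) w) = j1 (r1 x (phi w))"
      by (simp add: J01 J1 u linD(1)[OF Ler] j1Le Le_eps flip: j_eps)
         (simp add: e1anti[of "j1 w"])
  qed
  have I7: "r1 (L y x) v = r01 y (r1 x v) - r1 x (r00 y v)" for y x v
  proof (rule j1eq)
    obtain w where w: "sigma1 (L y x) = Le (sigma0 y) (sigma1 x) + j1 w" using DL by blast
    show "j1 (r1 (L y x) v) = j1 (r01 y (r1 x v) - r1 x (r00 y v))"
      by (simp add: J01 J1 J00 w linD(1)[OF Lel] linD(4)[OF Lel] linD(5)[OF j1l] j1Le Le_br)
  qed
  show ?thesis
    unfolding two_representation_def r01_def[symmetric] r00_def[symmetric] r1_def[symmetric]
    using R1 R2 R3 L1 L2 L3 L4 L5 L6 I1 I2 I3 I4 I5 I6 I7 by blast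
qed

end
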